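(* Let $m,n$ be positive integers. Then $$\binom{3m}{3n}\equiv\binom{m}{n}(1+9mn^2-9m^2n)\pmod{27}.$$ *)

theory Defs
  imports "HOL-Number_Theory.Number_Theory"
begin

end

theory Submission imports Defs "HOL-Computational_Algebra.Polynomial" begin

definition AA :: "int poly" where "AA = [:1,0,0,1:]"
definition CC :: "int poly" where "CC = [:0,1,1:]"

lemma P3: "[:1,1:]^3 = AA + smult 3 CC"
  by (simp add: AA_def CC_def power3_eq_cube)

lemma coeffA: "coeff (AA^k) i = (if 3 dvd i then int (k choose (i div 3)) else 0)"
proof -
  have eA: "AA = monom 1 3 + 1" by (simp add: AA_def monom_altdef power3_eq_cube one_pCons)
  have "AA^k = (\<Sum>j\<le>k. of_nat (k choose j) * monom 1 (3*j) * 1^(k-j))"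
    unfolding eA binomial_ring by (simp add: monom_power)
  then have "coeff (AA^k) i = (\<Sum>j\<le>k. if i = 3*j then int (k choose j) else 0)"
    by (simp add: coeff_sum of_nat_poly coeff_monom) (auto intro!: sum.cong)
  also have "\<dots> = (if 3 dvd i then int (k choose (i div 3)) else 0)"
  proof (cases "3 dvd i")
    case True
    then obtain q where q: "i = 3*q" by auto
    have "(\<Sum>j\<le>k. if i = 3*j then int (k choose j) else 0) = (\<Sum>j\<le>k. if j = q then int (k choose j) else 0)"
      by (rule sum.cong) (auto simp: q)
    also have "\<dots> = int (k choose q)" by (simp add: sum.delta)
    finally show ?thesis using q by simp
  next
    case False
    then show ?thesis by (auto intro!: sum.neutral)
  qed
  finally show ?thesis .
qed

lemma coeffC1: "n > 0 \<Longrightarrow> coeff (CC * AA^k) (3*n) = 0"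
proof -
  assume "n > 0"
  then obtain n' where n: "n = Suc n'" by (cases n) auto
  have e: "3*n = Suc (Suc (Suc (3*n')))" using n by simp
  have "coeff (CC * AA^k) (3*n) = coeff (AA^k) (Suc (Suc (3*n'))) + coeff (AA^k) (Suc (3*n'))"
    unfolding e by (simp add: CC_def)
  also have "\<dots> = 0" by (simp add: coeffA) presburger
  finally show ?thesis .
qed

lemma coeffC2: "n > 0 \<Longrightarrow> coeff (CC^2 * AA^k) (3*n) = 2 * int (k choose (n - 1))"
proof -
  assume "n > 0"
  then obtain n' where n: "n = Suc n'" by (cases n) auto
  have e: "3*n = Suc (Suc (Suc (3*n')))" using n by simp
  have c2: "CC^2 = [:0,0,1,2,1:]" by (simp add: CC_def power2_eq_square)
  have "coeff (CC^2 * AA^k) (3*n) = coeff (AA^k) (Suc (3*n')) + 2 * coeff (AA^k) (3*n') + (if n' = 0 then 0 else coeff (AA^k) (3*n' - 1))"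
    unfolding e c2 by (cases n') (auto simp: coeff_pCons)
  also have "\<dots> = 2 * int (k choose n')" by (simp add: coeffA) presburger
  finally show ?thesis using n by simp
qed

lemma binid: "1 \<le> n \<Longrightarrow> n < m \<Longrightarrow> m*(m-1)*((m-2) choose (n-1)) = n*(m-n)*(m choose n)"
proof -
  assume a: "1 \<le> n" "n < m"
  have h1: "n * (m choose n) = m * ((m-1) choose (n-1))"
    using binomial_absorption[of "n-1" m] a by simp
  have h2: "((m-1) - (n-1)) * ((m-1) choose (n-1)) = (m-1) * ((m-1-1) choose (n-1))"
    by (rule binomial_absorb_comp)
  have "n*(m-n)*(m choose n) = (m-n) * (m * ((m-1) choose (n-1)))" using h1 by (simp add: mult_ac)
  also have "\<dots> = m * (((m-1) - (n-1)) * ((m-1) choose (n-1)))" using a by (simp add: mult_ac)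
  also have "\<dots> = m*(m-1)*((m-2) choose (n-1))" using h2 a by (simp add: mult_ac diff_diff_left numeral_2_eq_2)
  finally show ?thesis by simp
qed

lemma three_dvd_choose: "3 dvd a \<Longrightarrow> \<not> 3 dvd k \<Longrightarrow> 3 dvd (a choose k)"
proof -
  assume a: "3 dvd a" "\<not> 3 dvd k"
  then have "k > 0" by (cases k) auto
  then have "k * (a choose k) = a * ((a-1) choose (k-1))"
    using binomial_absorption[of "k-1" a] by simp
  then have "(3::nat) dvd k * (a choose k)" using a by simp
  moreover have "coprime (3::nat) k" using a(2) by (simp add: prime_imp_coprime)
  ultimately show ?thesis using coprime_dvd_mult_right_iff by blast
qed

lemma key3: "1 \<le> n \<Longrightarrow> n < m \<Longrightarrow> 3 dvd n*(m-n)*(m+1)*(m choose n)"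
proof -
  assume a: "1 \<le> n" "n < m"
  have h1: "n * (m choose n) = m * ((m-1) choose (n-1))"
    using binomial_absorption[of "n-1" m] a by simp
  consider "m mod 3 = 0" | "m mod 3 = 1" | "m mod 3 = 2" by linarith
  then show ?thesis
  proof cases
    case 1
    then have "3 dvd n * (m choose n)" using h1 by (simp add: mod_0_imp_dvd)
    then show ?thesis by (metis dvd_mult2 dvd_mult mult.assoc mult.commute)
  next
    case 2
    show ?thesis
    proof (cases "n mod 3 = 1")
      case True
      then have "3 dvd m - n" using 2 a by (simp add: mod_eq_dvd_iff_nat[symmetric])
      then show ?thesis by simp
    next
      case False
      show ?thesis
      proof (cases "3 dvd n")
        case True then show ?thesis by simp
      next
        case nd: False
        have "3 dvd (m-1)" using 2 by presburger
        then have d: "3 dvd ((m-1) choose n)" using three_dvd_choose nd by blast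
        have "(m - n) * (m choose n) = m * ((m-1) choose n)" by (rule binomial_absorb_comp)
        then have "3 dvd (m - n) * (m choose n)" using d by simp
        then show ?thesis by (metis dvd_mult dvd_mult2 mult.assoc mult.commute)
      qed
    qed
  next
    case 3
    then have "3 dvd m + 1" by presburger
    then show ?thesis by (metis dvd_mult dvd_mult2 mult.assoc mult.commute)
  qed
qed

lemma ring_ident: fixes C S x n m :: int
  assumes "x = 9 * (n*(m-n)*C)"
  shows "C + x + S - C*(1+9*m*n^2-9*m^2*n) = 9*(n*(m-n)*(m+1)*C) + S"
  unfolding assms by (simp add: algebra_simps power2_eq_square)

theorem lemma2p9:
  fixes m n :: nat
  assumes "m > 0" and "n > 0"
  shows "[int ((3*m) choose (3*n)) = int (m choose n) * (1 + 9 * int m * (int n)^2 - 9 * (int m)^2 * int n)] (mod 27)"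
proof -
  consider "m < n" | "m = n" | "n < m" by linarith
  then show ?thesis
  proof cases
    case 1
    then have h: "(3*m) choose (3*n) = 0" "m choose n = 0" by (simp_all add: binomial_eq_0)
    show ?thesis by (simp only: h) (simp add: cong_def)
  next
    case 2 then show ?thesis by (simp add: power2_eq_square)
  next
    case 3
    have m2: "m \<ge> 2" using 3 assms by linarith
    define g where "g k = int (m choose k) * 3^k * coeff (CC^k * AA^(m-k)) (3*n)" for k
    have "int ((3*m) choose (3*n)) = coeff ([:1,1:]^(3*m)) (3*n)"
      using 3 by (simp add: coeff_linear_poly_power)
    also have "[:1,1:]^(3*m) = (smult 3 CC + AA)^m"
      by (simp add: power_mult P3 add.commute)
    also have "\<dots> = (\<Sum>k\<le>m. of_nat (m choose k) * (smult 3 CC)^k * AA^(m-k))"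
      by (rule binomial_ring)
    also have "coeff \<dots> (3*n) = (\<Sum>k\<le>m. g k)"
      by (simp add: coeff_sum g_def of_nat_poly smult_power mult.assoc mult.left_commute)
    also have "\<dots> = (\<Sum>k<3. g k) + (\<Sum>k\<in>{3..m}. g k)"
    proof -
      have "{..m} = {..<3} \<union> {3..m}" using m2 by auto
      then show ?thesis by (simp add: sum.union_disjoint ivl_disj_int)
    qed
    finally have e1: "int ((3*m) choose (3*n)) = (\<Sum>k<3. g k) + (\<Sum>k\<in>{3..m}. g k)" .
    have d27: "(27::int) dvd (\<Sum>k\<in>{3..m}. g k)"
    proof (rule dvd_sum)
      fix k assume "k \<in> {3..m}"
      then have "(3::int)^3 dvd 3^k" by (intro le_imp_power_dvd) simp
      then have "(27::int) dvd 3^k" by simp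
      then show "27 dvd g k" unfolding g_def by simp
    qed
    have s3: "(\<Sum>k<3. g k) = int (m choose n) + 18 * int (m choose 2) * int ((m-2) choose (n-1))"
    proof -
      have "(\<Sum>k<3. g k) = g 0 + g 1 + g 2" by (simp add: numeral_3_eq_3 numeral_2_eq_2)
      moreover have "g 0 = int (m choose n)" by (simp add: g_def coeffA)
      moreover have "g 1 = 0" using assms by (simp add: g_def coeffC1)
      moreover have "g 2 = 18 * int (m choose 2) * int ((m-2) choose (n-1))" using assms by (simp add: g_def coeffC2)
      ultimately show ?thesis by simp
    qed
    have bi: "int (m*(m-1)*((m-2) choose (n-1))) = int (n*(m-n)*(m choose n))"
      using binid[of n m] 3 assms by simp
    have c2: "2 * int (m choose 2) = int m * (int m - 1)"
    proof -
      have "2 * (m choose 2) = m * (m - 1)" using binomial_absorption[of 1 m] by (simp add: numeral_2_eq_2)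
      then have "int (2 * (m choose 2)) = int (m * (m - 1))" by simp
      then show ?thesis using m2 by (simp add: of_nat_diff)
    qed
    obtain q where q: "n*(m-n)*(m+1)*(m choose n) = 3*q" using key3[of n m] 3 assms by (auto elim: dvdE)
    have qi: "int n * (int m - int n) * (int m + 1) * int (m choose n) = 3 * int q"
      using arg_cong[OF q, of int] 3 by (simp add: of_nat_diff distrib_left distrib_right)
    have bi': "int m * (int m - 1) * int ((m-2) choose (n-1)) = int n * (int m - int n) * int (m choose n)"
      using bi 3 m2 by (simp add: of_nat_diff)
    have "int ((3*m) choose (3*n)) - int (m choose n) * (1 + 9 * int m * (int n)^2 - 9 * (int m)^2 * int n)
       = 27 * int q + (\<Sum>k\<in>{3..m}. g k)"
    proof -
      have "18 * int (m choose 2) * int ((m-2) choose (n-1)) = 9 * (int n * (int m - int n) * int (m choose n))"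
      proof -
        have "18 * int (m choose 2) * int ((m-2) choose (n-1)) = 9 * ((2 * int (m choose 2)) * int ((m-2) choose (n-1)))" by simp
        also have "\<dots> = 9 * (int n * (int m - int n) * int (m choose n))" unfolding c2 bi' ..
        finally show ?thesis .
      qed
      then have "int ((3*m) choose (3*n)) - int (m choose n) * (1 + 9 * int m * (int n)^2 - 9 * (int m)^2 * int n)
          = 9 * (int n * (int m - int n) * (int m + 1) * int (m choose n)) + (\<Sum>k\<in>{3..m}. g k)"
        unfolding e1 s3 by (rule ring_ident)
      then show ?thesis unfolding qi by simp
    qed
    then have "(27::int) dvd int ((3*m) choose (3*n)) - int (m choose n) * (1 + 9 * int m * (int n)^2 - 9 * (int m)^2 * int n)"
      using d27 by simp
    then show ?thesis by (simp add: cong_iff_dvd_diff cong_sym_eq)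
  qed
qed

end
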